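(* Let $A\in\mathbb{R}^{n\times n}$, $\bm{g}\in\mathbb{R}^n$, and let $\bm{y}$ be a solution of $\bm{y}''(t)=-A\bm{y}(t)+\bm{g}$ on $\mathbb{R}$. Then for all $t\in\mathbb{R}$ and $\delta>0$, $$\bm{y}(t+\delta)-2\bm{y}(t)+\bm{y}(t-\delta)=\delta^2\psi(\delta^2A)\big(-A\bm{y}(t)+\bm{g}\big).$$ Consequently, for $\bm{y}$ with $\bm{y}(0)=\bm{u}$, $\bm{y}'(0)=\bm{v}$, the one-step scheme $\bm{y}_0=\bm{u}$, $\bm{v}_0=\sigma(\delta^2A)\bm{v}$, $\bm{v}_{k+1/2}=\bm{v}_k+\tfrac12\delta\psi(\delta^2A)(-A\bm{y}_k+\bm{g})$, $\bm{y}_{k+1}=\bm{y}_k+\delta\bm{v}_{k+1/2}$, $\bm{v}_{k+1}=\bm{v}_{k+1/2}+\tfrac12\delta\psi(\delta^2A)(-A\bm{y}_{k+1}+\bm{g})$ produces $\bm{y}_k=\bm{y}(k\delta)$ for all $k\ge0$.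
   Context: $\psi$ and $\sigma$ are the entire functions determined by $\psi(x^2)=2(1-\cos x)/x^2$ and $\sigma(x^2)=\sin(x)/x$ (with $\psi(0)=\sigma(0)=1$); matrix functions are defined via their power series. *)

theory Defs
  imports "HOL-Analysis.Analysis"
begin

primrec mat_pow :: "real^'n^'n \<Rightarrow> nat \<Rightarrow> real^'n^'n" where
  "mat_pow A 0 = mat 1"
| "mat_pow A (Suc k) = A ** mat_pow A k"

text \<open>psi(x) = sum_k 2(-1)^k x^k/(2k+2)!, so that psi(x^2) = 2(1 - cos x)/x^2, psi(0)=1.
  The matrix function is defined through the power series.\<close>
definition psi_mat :: "real^'n^'n \<Rightarrow> real^'n^'n" where
  "psi_mat A = (\<Sum>k. (2 * (-1)^k / fact (2*k+2)) *\<^sub>R mat_pow A k)"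

text \<open>sigma(x) = sum_k (-1)^k x^k/(2k+1)!, so that sigma(x^2) = sin x / x, sigma(0)=1.\<close>
definition sigma_mat :: "real^'n^'n \<Rightarrow> real^'n^'n" where
  "sigma_mat A = (\<Sum>k. ((-1)^k / fact (2*k+1)) *\<^sub>R mat_pow A k)"

end

theory Submission
  imports Defs
begin


lemma mat_pow_Suc_vec: "mat_pow B (Suc k) *v x = B *v (mat_pow B k *v x)"
  by (simp add: matrix_vector_mul_assoc)

lemma mat_scale_mult: "(a *\<^sub>R A) ** (b *\<^sub>R M) = (a*b) *\<^sub>R (A ** (M::real^'n^'n))"
  by (simp add: vec_eq_iff matrix_matrix_mult_def sum_distrib_left algebra_simps)

lemma mat_pow_scale: "mat_pow (a *\<^sub>R A) k = a^k *\<^sub>R mat_pow A k"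
  by (induction k) (simp_all add: mat_scale_mult)

lemma op_bound: "\<exists>K\<ge>2. \<forall>x. norm (B *v x) \<le> K * norm (x::real^'n)" for B :: "real^'n^'m"
proof -
  obtain K where "\<forall>x. norm (B *v x) \<le> norm x * K"
    using bounded_linear.bounded[OF matrix_vector_mul_bounded_linear] by blast
  then show ?thesis
  proof (intro exI[of _ "max K 2"] conjI allI)
    fix x :: "real^'n"
    have "norm x * K \<le> norm x * max K 2" by (simp add: mult_left_mono)
    then show "norm (B *v x) \<le> max K 2 * norm x" using \<open>\<forall>x. _\<close>[rule_format, of x] by (simp add: mult.commute)
  qed simp
qed

lemma mat_pow_bound:
  assumes "\<forall>x. norm (B *v x) \<le> K * norm (x::real^'n)" "K \<ge> 0"
  shows "norm (mat_pow B k *v x) \<le> K^k * norm x"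
proof (induction k)
  case 0 then show ?case by simp
next
  case (Suc k)
  have "norm (mat_pow B (Suc k) *v x) \<le> K * norm (mat_pow B k *v x)"
    using assms(1) by (simp add: matrix_vector_mul_assoc[symmetric])
  also have "\<dots> \<le> K * (K^k * norm x)" using Suc assms(2) by (simp add: mult_left_mono)
  finally show ?case by simp
qed

lemma entry_eq: "M $ i $ j = (M *v axis j 1) $ i" for M :: "real^'n^'m"
  by (simp add: matrix_vector_mult_def axis_def if_distrib cong: if_cong)

lemma norm_le_rows: "norm (M::real^'n^'m) \<le> (\<Sum>i\<in>UNIV. norm (M $ i))"
  by (simp add: norm_vec_def L2_set_le_sum)

lemma mat_pow_norm_bound:
  assumes "\<forall>x. norm (B *v x) \<le> K * norm (x::real^'n)" "K \<ge> 0"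
  shows "norm (mat_pow B k) \<le> real (CARD('n))^2 * K^k"
proof -
  have e: "\<bar>mat_pow B k $ i $ j\<bar> \<le> K^k" for i j
  proof -
    have "\<bar>mat_pow B k $ i $ j\<bar> \<le> norm (mat_pow B k *v axis j 1)"
      by (subst entry_eq) (rule component_le_norm_cart)
    also have "\<dots> \<le> K^k * norm (axis j (1::real))" by (rule mat_pow_bound[OF assms])
    finally show ?thesis by simp
  qed
  have "norm (mat_pow B k) \<le> (\<Sum>i\<in>UNIV. norm (mat_pow B k $ i))" by (rule norm_le_rows)
  also have "\<dots> \<le> (\<Sum>i\<in>(UNIV::'n set). (\<Sum>j\<in>(UNIV::'n set). K^k))"
  proof (rule sum_mono)
    fix i
    have "norm (mat_pow B k $ i) \<le> (\<Sum>j\<in>UNIV. \<bar>mat_pow B k $ i $ j\<bar>)" by (rule norm_le_l1_cart)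
    also have "\<dots> \<le> (\<Sum>j\<in>(UNIV::'n set). K^k)" by (rule sum_mono) (rule e)
    finally show "norm (mat_pow B k $ i) \<le> (\<Sum>j\<in>(UNIV::'n set). K^k)" .
  qed
  also have "\<dots> = real (CARD('n))^2 * K^k" by (simp add: power2_eq_square)
  finally show ?thesis .
qed

lemma mat_series_summable:
  fixes B :: "real^'n^'n"
  assumes c: "\<And>k. \<bar>c k\<bar> \<le> 1 / fact k"
  shows "summable (\<lambda>k. c k *\<^sub>R mat_pow B k)"
proof -
  obtain K where K: "K \<ge> 2" "\<forall>x. norm (B *v x) \<le> K * norm (x::real^'n)" using op_bound by blast
  define C where "C = real (CARD('n))^2"
  have C: "C \<ge> 0" by (simp add: C_def)
  show ?thesis
  proof (rule summable_comparison_test)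
    show "\<exists>N. \<forall>n\<ge>N. norm (c n *\<^sub>R mat_pow B n) \<le> C * (inverse (fact n) * K^n)"
    proof (intro exI allI impI)
      fix n :: nat
      have "norm (c n *\<^sub>R mat_pow B n) = \<bar>c n\<bar> * norm (mat_pow B n)" by simp
      also have "\<dots> \<le> (1 / fact n) * (C * K^n)"
        using mat_pow_norm_bound[OF K(2)] K(1) c[of n] unfolding C_def
        by (intro mult_mono) auto
      finally show "norm (c n *\<^sub>R mat_pow B n) \<le> C * (inverse (fact n) * K^n)"
        by (simp add: field_simps)
    qed
    show "summable (\<lambda>n. C * (inverse (fact n) * K^n))"
      by (intro summable_mult summable_exp)
  qed
qed



fun Dy :: "real^'n^'n \<Rightarrow> real^'n \<Rightarrow> (real \<Rightarrow> real^'n) \<Rightarrow> (real \<Rightarrow> real^'n) \<Rightarrow> nat \<Rightarrow> real \<Rightarrow> real^'n" where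
  "Dy A g y y' 0 s = y s"
| "Dy A g y y' (Suc 0) s = y' s"
| "Dy A g y y' (Suc (Suc n)) s = - (A *v Dy A g y y' n s) + (if n = 0 then g else 0)"

lemma Dy_deriv:
  assumes dy: "\<And>t. (y has_vector_derivative y' t) (at t)"
    and ddy: "\<And>t. (y' has_vector_derivative (- (A *v y t) + g)) (at t)"
  shows "(Dy A g y y' n has_vector_derivative Dy A g y y' (Suc n) s) (at s)"
proof (induction n arbitrary: s rule: less_induct)
  case (less n)
  show ?case
  proof (cases n)
    case 0
    have "Dy A g y y' 0 = y" by (rule ext) simp
    then show ?thesis using 0 dy by simp
  next
    case (Suc m)
    show ?thesis
    proof (cases m)
      case 0 then show ?thesis using Suc ddy by simp
    next
      case (Suc k)
      have ih: "(Dy A g y y' k has_vector_derivative Dy A g y y' (Suc k) s) (at s)"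
        using \<open>n = Suc m\<close> Suc by (intro less.IH) simp
      have "((\<lambda>s. - (A *v Dy A g y y' k s) + (if k = 0 then g else 0)) has_vector_derivative
              - (A *v Dy A g y y' (Suc k) s) + 0) (at s)"
        by (intro has_vector_derivative_add has_vector_derivative_minus has_vector_derivative_const
            bounded_linear.has_vector_derivative[OF matrix_vector_mul_bounded_linear] ih)
      moreover have "Dy A g y y' n = (\<lambda>s. - (A *v Dy A g y y' k s) + (if k = 0 then g else 0))"
        using \<open>n = Suc m\<close> Suc by (intro ext) (simp del: Dy.simps(3) add: Dy.simps(3)[of A g y y' k])
      moreover have "Dy A g y y' (Suc n) s = - (A *v Dy A g y y' (Suc k) s) + 0"
        using \<open>n = Suc m\<close> Suc by (simp del: Dy.simps(3) add: Dy.simps(3)[of A g y y' "Suc k"])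
      ultimately show ?thesis by metis
    qed
  qed
qed

lemma Dy_even: "Dy A g y y' (2*k+2) s = (-1)^k *\<^sub>R (mat_pow A k *v (- (A *v y s) + g))"
proof (induction k)
  case 0 then show ?case by (simp add: numeral_2_eq_2)
next
  case (Suc k)
  have "Dy A g y y' (2*Suc k+2) s = - (A *v Dy A g y y' (2*k+2) s)"
    by (simp add: numeral_2_eq_2)
  also have "\<dots> = (-1)^Suc k *\<^sub>R (mat_pow A (Suc k) *v (- (A *v y s) + g))"
    by (simp only: Suc mat_pow_Suc_vec matrix_vector_mult_scaleR) simp
  finally show ?case .
qed

lemma Dy_odd: "Dy A g y y' (2*k+1) s = (-1)^k *\<^sub>R (mat_pow A k *v y' s)"
proof (induction k)
  case 0 then show ?case by simp
next
  case (Suc k)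
  have "Dy A g y y' (2*Suc k+1) s = - (A *v Dy A g y y' (2*k+1) s)"
    by (simp add: numeral_2_eq_2)
  also have "\<dots> = (-1)^Suc k *\<^sub>R (mat_pow A (Suc k) *v y' s)"
    by (simp only: Suc mat_pow_Suc_vec matrix_vector_mult_scaleR) simp
  finally show ?case .
qed

lemma Dy_bound:
  assumes K: "K \<ge> 2" "\<forall>x. norm (A *v x) \<le> K * norm x"
  shows "norm (Dy A g y y' n s) \<le> K^n * (norm (y s) + norm (y' s) + norm g)"
proof (induction n rule: less_induct)
  case (less n)
  define B where "B = norm (y s) + norm (y' s) + norm g"
  have B: "B \<ge> norm (y s)" "B \<ge> norm (y' s)" "B \<ge> norm g" "B \<ge> 0" by (auto simp: B_def)
  have Kn: "K^j \<ge> 1" for j using K(1) by (simp add: one_le_power)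
  show ?case
  proof (cases n)
    case 0 then show ?thesis using B by (simp add: B_def)
  next
    case (Suc m)
    show ?thesis
    proof (cases m)
      case 0
      have "1 * B \<le> K * B" using B(4) K(1) by (intro mult_right_mono) auto
      then have "norm (y' s) \<le> K * B" using B(2) by simp
      then show ?thesis using Suc 0 by (simp add: B_def)
    next
      case (Suc k)
      have ih: "norm (Dy A g y y' k s) \<le> K^k * B" using less \<open>n = Suc m\<close> Suc B_def by simp
      have eq: "Dy A g y y' n s = - (A *v Dy A g y y' k s) + (if k = 0 then g else 0)"
        using \<open>n = Suc m\<close> Suc by simp
      have "norm (- (A *v Dy A g y y' k s) + (if k = 0 then g else 0))
          \<le> norm (- (A *v Dy A g y y' k s)) + norm (if k = 0 then g else 0)"
        by (rule norm_triangle_ineq)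
      also have "\<dots> \<le> norm (A *v Dy A g y y' k s) + norm g" by simp
      finally have "norm (Dy A g y y' n s) \<le> norm (A *v Dy A g y y' k s) + norm g" using eq by simp
      also have "\<dots> \<le> K * (K^k * B) + B"
      proof (rule add_mono)
        have "norm (A *v Dy A g y y' k s) \<le> K * norm (Dy A g y y' k s)" using K(2) by blast
        also have "\<dots> \<le> K * (K^k * B)" using ih K(1) by (intro mult_left_mono) auto
        finally show "norm (A *v Dy A g y y' k s) \<le> K * (K^k * B)" .
      qed (rule B(3))
      also have "\<dots> \<le> K^n * B"
      proof -
        have "K * K^k \<ge> 1" using Kn[of "Suc k"] by simp
        then have "1 * B \<le> (K * K^k) * B" using B(4) by (intro mult_right_mono) auto
        then have "K * (K^k * B) + B \<le> K * (K^k * B) + K * K^k * B" by (simp add: algebra_simps)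
        also have "\<dots> = 2 * K^(Suc k) * B" by simp
        also have "\<dots> \<le> K * K^(Suc k) * B" using K(1) B(4) Kn[of "Suc k"] by (intro mult_right_mono) auto
        finally show ?thesis using \<open>n = Suc m\<close> Suc by simp
      qed
      finally show ?thesis by (simp add: B_def)
    qed
  qed
qed



lemma taylor_sums:
  fixes A :: "real^'n^'n" and g :: "real^'n" and y y' :: "real \<Rightarrow> real^'n"
  assumes dy: "\<And>t. (y has_vector_derivative y' t) (at t)"
    and ddy: "\<And>t. (y' has_vector_derivative (- (A *v y t) + g)) (at t)"
  shows "(\<lambda>m. Dy A g y y' m t $ i / fact m * h^m) sums (y (t+h) $ i)"
proof -
  obtain K where K: "K \<ge> 2" "\<forall>x. norm (A *v x) \<le> K * norm (x::real^'n)" using op_bound by blast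
  define B where "B = (\<lambda>s. norm (y s) + norm (y' s) + norm g)"
  have cy: "continuous_on UNIV y"
    by (intro continuous_at_imp_continuous_on ballI has_vector_derivative_continuous[OF dy])
  have cy': "continuous_on UNIV y'"
    by (intro continuous_at_imp_continuous_on ballI has_vector_derivative_continuous[OF ddy])
  have cB: "continuous_on (cball t \<bar>h\<bar>) B" unfolding B_def
    by (intro continuous_intros continuous_on_subset[OF cy] continuous_on_subset[OF cy']) auto
  have "bounded (B ` cball t \<bar>h\<bar>)"
    by (intro compact_imp_bounded compact_continuous_image cB compact_cball)
  then obtain M where M: "\<And>s. s \<in> cball t \<bar>h\<bar> \<Longrightarrow> B s \<le> M"
    unfolding bounded_real by (metis abs_ge_self image_eqI order_trans)
  define diff where "diff = (\<lambda>m x. Dy A g y y' m (t+x) $ i)"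
  have D: "\<forall>m x. DERIV (diff m) x :> diff (Suc m) x"
  proof (intro allI)
    fix m x
    have "((\<lambda>x. t + x) has_vector_derivative 1) (at x)"
      using has_vector_derivative_add[OF has_vector_derivative_const has_vector_derivative_id] by simp
    from vector_diff_chain_at[OF this Dy_deriv[OF dy ddy]]
    have "((Dy A g y y' m \<circ> (\<lambda>x. t + x)) has_vector_derivative Dy A g y y' (Suc m) (t+x)) (at x)"
      by simp
    from bounded_linear.has_vector_derivative[OF bounded_linear_vec_nth this, of i]
    show "DERIV (diff m) x :> diff (Suc m) x"
      unfolding diff_def has_real_derivative_iff_has_vector_derivative by (simp add: o_def)
  qed
  define S where "S = (\<lambda>n. \<Sum>m<n. Dy A g y y' m t $ i / fact m * h^m)"
  define R where "R = (\<lambda>n. y (t+h) $ i - S n)"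
  have Rb: "norm (R n) \<le> M * (inverse (fact n) * (K * \<bar>h\<bar>)^n)" for n
  proof -
    obtain th where th: "\<bar>th\<bar> \<le> \<bar>h\<bar>"
      "diff 0 h = (\<Sum>m<n. (diff m 0 / fact m) * h ^ m) + (diff n th / fact n) * h ^ n"
      using Maclaurin_all_le[of diff "diff 0", OF refl D] by blast
    have "R n = diff n th / fact n * h^n"
      using th(2) unfolding R_def S_def diff_def by simp
    then have "norm (R n) = \<bar>Dy A g y y' n (t+th) $ i\<bar> * (inverse (fact n) * \<bar>h\<bar>^n)"
      by (simp add: diff_def abs_mult power_abs divide_inverse mult_ac)
    also have "\<dots> \<le> (K^n * M) * (inverse (fact n) * \<bar>h\<bar>^n)"
    proof (rule mult_right_mono)
      have "\<bar>Dy A g y y' n (t+th) $ i\<bar> \<le> norm (Dy A g y y' n (t+th))" by (rule component_le_norm_cart)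
      also have "\<dots> \<le> K^n * B (t+th)" unfolding B_def by (rule Dy_bound[OF K])
      also have "\<dots> \<le> K^n * M" using M[of "t+th"] th(1) K(1) by (intro mult_left_mono) (auto simp: dist_real_def)
      finally show "\<bar>Dy A g y y' n (t+th) $ i\<bar> \<le> K^n * M" .
    qed simp
    also have "\<dots> = M * (inverse (fact n) * (K * \<bar>h\<bar>)^n)" by (simp add: power_mult_distrib)
    finally show ?thesis .
  qed
  have "R \<longlonglongrightarrow> 0"
  proof (rule Lim_null_comparison)
    show "\<forall>\<^sub>F n in sequentially. norm (R n) \<le> M * (inverse (fact n) * (K * \<bar>h\<bar>)^n)"
      using Rb by simp
    show "(\<lambda>n. M * (inverse (fact n) * (K * \<bar>h\<bar>)^n)) \<longlonglongrightarrow> 0"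
      using tendsto_mult_right_zero[OF summable_LIMSEQ_zero[OF summable_exp]] by blast
  qed
  then have "(\<lambda>n. y (t+h) $ i - R n) \<longlonglongrightarrow> y (t+h) $ i - 0"
    by (intro tendsto_intros)
  then show ?thesis unfolding sums_def R_def S_def by simp
qed



lemma sums_pairs: assumes "c sums S" shows "(\<lambda>n. c (2*n) + c (2*n+1)) sums S"
proof -
  have "(\<lambda>n. sum c {n * 2 ..< n * 2 + 2}) sums S" by (rule sums_group[OF assms]) simp
  moreover have "sum c {n * 2 ..< n * 2 + 2} = c (2*n) + c (2*n+1)" for n
    by (simp add: numeral_2_eq_2 mult.commute)
  ultimately show ?thesis by simp
qed

lemma bl_mv: "bounded_linear (\<lambda>M::real^'n^'m. (M *v w) $ i)"
proof -
  have "linear (\<lambda>M::real^'n^'m. M *v w)"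
    by (intro linearI) (simp_all add: matrix_vector_mult_add_rdistrib scaleR_matrix_vector_assoc)
  then have "bounded_linear (\<lambda>M::real^'n^'m. M *v w)" by (simp add: linear_conv_bounded_linear)
  then show ?thesis using bounded_linear_compose[OF bounded_linear_vec_nth] by blast
qed

lemma aux_ineq1: "0 < (a::real) \<Longrightarrow> 2*a \<le> F \<Longrightarrow> \<bar>2 * (-1)^k / F\<bar> \<le> 1 / a"
  by (simp add: abs_mult power_abs field_simps)

lemma aux_ineq2: "0 < (a::real) \<Longrightarrow> a \<le> F \<Longrightarrow> \<bar>(-1)^k / F\<bar> \<le> 1 / a"
  by (simp add: abs_mult power_abs field_simps)

lemma fact_ineq1: "\<bar>2 * (-1)^k / fact (2*k+2)\<bar> \<le> (1::real) / fact k"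
proof -
  have n: "2 * fact k \<le> (fact (2*k+2) :: nat)"
  proof -
    have "fact k \<le> (fact (2*k+1)::nat)" by (rule fact_mono) simp
    moreover have "fact (2*k+2) = (2*k+2) * (fact (2*k+1)::nat)"
      using fact_Suc[of "2*k+1"] by simp
    moreover have "(2::nat) \<le> 2*k+2" by simp
    ultimately show ?thesis by (metis mult_le_mono)
  qed
  have "real (2 * fact k) \<le> real (fact (2*k+2))" using n by (simp only: of_nat_le_iff)
  then have "2 * fact k \<le> (fact (2*k+2)::real)" by (simp only: of_nat_mult of_nat_fact of_nat_numeral)
  then show ?thesis by (intro aux_ineq1) simp_all
qed

lemma fact_ineq2: "\<bar>(-1)^k / fact (2*k+1)\<bar> \<le> (1::real) / fact k"
proof -
  have "fact k \<le> (fact (2*k+1) :: real)" by (rule fact_mono) simp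
  then show ?thesis by (intro aux_ineq2) simp_all
qed



lemma psi_sums: "(\<lambda>k. (2 * (-1)^k / fact (2*k+2)) *\<^sub>R mat_pow B k) sums psi_mat B"
  unfolding psi_mat_def by (rule summable_sums, rule mat_series_summable, rule fact_ineq1)

lemma sigma_sums: "(\<lambda>k. ((-1)^k / fact (2*k+1)) *\<^sub>R mat_pow B k) sums sigma_mat B"
  unfolding sigma_mat_def by (rule summable_sums, rule mat_series_summable, rule fact_ineq2)

lemma smv_comp: "((c *\<^sub>R M) *v w) $ i = c * ((M *v w) $ i)" for M :: "real^'n^'m"
  by (simp add: scaleR_matrix_vector_assoc[symmetric])

lemma even_identity:
  fixes A :: "real^'n^'n" and g :: "real^'n" and y y' :: "real \<Rightarrow> real^'n"
  assumes dy: "\<And>t. (y has_vector_derivative y' t) (at t)"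
    and ddy: "\<And>t. (y' has_vector_derivative (- (A *v y t) + g)) (at t)"
  shows "y (t + h) - 2 *\<^sub>R y t + y (t - h) = h\<^sup>2 *\<^sub>R (psi_mat (h\<^sup>2 *\<^sub>R A) *v (- (A *v y t) + g))"
proof -
  define w where "w = - (A *v y t) + g"
  have "(y (t + h) - 2 *\<^sub>R y t + y (t - h)) $ i = (h\<^sup>2 *\<^sub>R (psi_mat (h\<^sup>2 *\<^sub>R A) *v w)) $ i" for i
  proof -
    define c where "c = (\<lambda>m. Dy A g y y' m t $ i / fact m * (h^m + (-h)^m))"
    have "c sums (y (t+h) $ i + y (t + -h) $ i)"
      using sums_add[OF taylor_sums[OF dy ddy, of t i h] taylor_sums[OF dy ddy, of t i "-h"]]
      unfolding c_def by (simp add: algebra_simps add_divide_distrib diff_divide_distrib)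
    from sums_pairs[OF this] have "(\<lambda>n. c (2*n)) sums (y (t+h) $ i + y (t - h) $ i)"
      unfolding c_def by (simp add: power_minus_odd)
    then have s1: "(\<lambda>n. c (2 * Suc n)) sums (y (t+h) $ i + y (t - h) $ i - c 0)"
      using sums_Suc_iff[of "\<lambda>n. c (2*n)"] by simp
    have "(\<lambda>k. ((2 * (-1)^k / fact (2*k+2)) *\<^sub>R mat_pow (h\<^sup>2 *\<^sub>R A) k *v w) $ i)
            sums ((psi_mat (h\<^sup>2 *\<^sub>R A) *v w) $ i)"
      by (rule bounded_linear.sums[OF bl_mv psi_sums])
    from sums_mult[OF this, of "h\<^sup>2"]
    have s2: "(\<lambda>k. h\<^sup>2 * (((2 * (-1)^k / fact (2*k+2)) *\<^sub>R mat_pow (h\<^sup>2 *\<^sub>R A) k *v w) $ i))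
            sums (h\<^sup>2 * (psi_mat (h\<^sup>2 *\<^sub>R A) *v w) $ i)" .
    have eq: "c (2 * Suc k) = h\<^sup>2 * (((2 * (-1)^k / fact (2*k+2)) *\<^sub>R mat_pow (h\<^sup>2 *\<^sub>R A) k *v w) $ i)" for k
    proof -
      have e: "2 * Suc k = 2*k+2" by simp
      have p1: "(-h)^(2*k+2) = h\<^sup>2 * (h\<^sup>2)^k" "h^(2*k+2) = h\<^sup>2 * (h\<^sup>2)^k"
        by (simp_all add: power_mult[symmetric] power_add[symmetric] mult.commute)
      show ?thesis unfolding c_def e Dy_even mat_pow_scale scaleR_scaleR smv_comp w_def[symmetric] p1
        by (simp add: divide_inverse mult_ac)
    qed
    have "y (t+h) $ i + y (t - h) $ i - c 0 = h\<^sup>2 * (psi_mat (h\<^sup>2 *\<^sub>R A) *v w) $ i"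
      using sums_unique2[OF s1, unfolded eq, OF s2] .
    moreover have "c 0 = 2 * y t $ i" by (simp add: c_def)
    ultimately show ?thesis by simp
  qed
  then show ?thesis unfolding w_def by (simp add: vec_eq_iff)
qed

lemma odd_identity:
  fixes A :: "real^'n^'n" and g :: "real^'n" and y y' :: "real \<Rightarrow> real^'n"
  assumes dy: "\<And>t. (y has_vector_derivative y' t) (at t)"
    and ddy: "\<And>t. (y' has_vector_derivative (- (A *v y t) + g)) (at t)"
  shows "y (t + h) - y (t - h) = (2 * h) *\<^sub>R (sigma_mat (h\<^sup>2 *\<^sub>R A) *v y' t)"
proof -
  have "(y (t + h) - y (t - h)) $ i = ((2 * h) *\<^sub>R (sigma_mat (h\<^sup>2 *\<^sub>R A) *v y' t)) $ i" for i
  proof -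
    define c where "c = (\<lambda>m. Dy A g y y' m t $ i / fact m * (h^m - (-h)^m))"
    have "c sums (y (t+h) $ i - y (t + -h) $ i)"
      using sums_diff[OF taylor_sums[OF dy ddy, of t i h] taylor_sums[OF dy ddy, of t i "-h"]]
      unfolding c_def by (simp add: algebra_simps add_divide_distrib diff_divide_distrib)
    from sums_pairs[OF this] have s1: "(\<lambda>n. c (2*n+1)) sums (y (t+h) $ i - y (t - h) $ i)"
      unfolding c_def by (simp add: power_minus_even)
    have "(\<lambda>k. ((((-1)^k / fact (2*k+1)) *\<^sub>R mat_pow (h\<^sup>2 *\<^sub>R A) k) *v y' t) $ i)
            sums ((sigma_mat (h\<^sup>2 *\<^sub>R A) *v y' t) $ i)"
      by (rule bounded_linear.sums[OF bl_mv sigma_sums])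
    from sums_mult[OF this, of "2*h"]
    have s2: "(\<lambda>k. (2*h) * (((((-1)^k / fact (2*k+1)) *\<^sub>R mat_pow (h\<^sup>2 *\<^sub>R A) k) *v y' t) $ i))
            sums ((2*h) * (sigma_mat (h\<^sup>2 *\<^sub>R A) *v y' t) $ i)" .
    have eq: "c (2 * k + 1) = (2*h) * (((((-1)^k / fact (2*k+1)) *\<^sub>R mat_pow (h\<^sup>2 *\<^sub>R A) k) *v y' t) $ i)" for k
    proof -
      have p1: "(-h)^(2*k+1) = - (h * (h\<^sup>2)^k)" "h^(2*k+1) = h * (h\<^sup>2)^k"
        by (simp_all add: power_mult[symmetric] power_add[symmetric] mult.commute)
      show ?thesis unfolding c_def Dy_odd mat_pow_scale scaleR_scaleR smv_comp p1
        by (simp add: divide_inverse mult_ac)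
    qed
    show ?thesis using sums_unique2[OF s1, unfolded eq, OF s2] by simp
  qed
  then show ?thesis by (simp add: vec_eq_iff)
qed



lemma lin_aux:
  fixes a b c P Q :: "'a::real_vector"
  assumes "a - 2 *\<^sub>R c + b = P" "a - b = Q"
  shows "a = c + (1/2) *\<^sub>R P + (1/2) *\<^sub>R Q"
proof -
  have "P + Q = 2 *\<^sub>R (a - c)" using assms by (simp add: algebra_simps scaleR_2)
  then have "(1/2) *\<^sub>R P + (1/2) *\<^sub>R Q = a - c" by (metis scaleR_right_distrib scaleR_scaleR divide_self_if
     times_divide_eq_left mult_1 zero_neq_numeral scaleR_one)
  then show ?thesis by (simp add: algebra_simps)
qed

lemma grp_aux: fixes a b c P :: "'a::ab_group_add" shows "a - b + c = P \<Longrightarrow> a = b - c + P"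
  by (simp add: algebra_simps)

theorem mainTheorem7:
  fixes A :: "real^'n^'n" and g :: "real^'n"
    and y y' :: "real \<Rightarrow> real^'n"
  assumes dy: "\<And>t. (y has_vector_derivative y' t) (at t)"
    and ddy: "\<And>t. (y' has_vector_derivative (- (A *v y t) + g)) (at t)"
  shows "(\<forall>t \<delta>. \<delta> > 0 \<longrightarrow>
            y (t + \<delta>) - 2 *\<^sub>R y t + y (t - \<delta>)
              = \<delta>\<^sup>2 *\<^sub>R (psi_mat (\<delta>\<^sup>2 *\<^sub>R A) *v (- (A *v y t) + g)))
       \<and> (\<forall>\<delta> ys vs vh. \<delta> > 0
            \<and> ys 0 = y 0
            \<and> vs 0 = sigma_mat (\<delta>\<^sup>2 *\<^sub>R A) *v y' 0
            \<and> (\<forall>k. vh k = vs k + (\<delta> / 2) *\<^sub>R (psi_mat (\<delta>\<^sup>2 *\<^sub>R A) *v (- (A *v ys k) + g)))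
            \<and> (\<forall>k. ys (Suc k) = ys k + \<delta> *\<^sub>R vh k)
            \<and> (\<forall>k. vs (Suc k) = vh k + (\<delta> / 2) *\<^sub>R (psi_mat (\<delta>\<^sup>2 *\<^sub>R A) *v (- (A *v ys (Suc k)) + g)))
            \<longrightarrow> (\<forall>k. ys k = y (real k * \<delta>)))"
proof (intro conjI allI impI)
  fix t \<delta> :: real
  show "y (t + \<delta>) - 2 *\<^sub>R y t + y (t - \<delta>)
              = \<delta>\<^sup>2 *\<^sub>R (psi_mat (\<delta>\<^sup>2 *\<^sub>R A) *v (- (A *v y t) + g))"
    by (rule even_identity[OF dy ddy])
next
  fix \<delta> :: real and ys vs vh :: "nat \<Rightarrow> real^'n" and k :: nat
  assume H: "\<delta> > 0
            \<and> ys 0 = y 0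
            \<and> vs 0 = sigma_mat (\<delta>\<^sup>2 *\<^sub>R A) *v y' 0
            \<and> (\<forall>k. vh k = vs k + (\<delta> / 2) *\<^sub>R (psi_mat (\<delta>\<^sup>2 *\<^sub>R A) *v (- (A *v ys k) + g)))
            \<and> (\<forall>k. ys (Suc k) = ys k + \<delta> *\<^sub>R vh k)
            \<and> (\<forall>k. vs (Suc k) = vh k + (\<delta> / 2) *\<^sub>R (psi_mat (\<delta>\<^sup>2 *\<^sub>R A) *v (- (A *v ys (Suc k)) + g)))"
  define F where "F = (\<lambda>x. psi_mat (\<delta>\<^sup>2 *\<^sub>R A) *v (- (A *v x) + g))"
  have y0: "ys 0 = y 0" and v0: "vs 0 = sigma_mat (\<delta>\<^sup>2 *\<^sub>R A) *v y' 0"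
    and vh: "\<And>k. vh k = vs k + (\<delta> / 2) *\<^sub>R F (ys k)"
    and ysS: "\<And>k. ys (Suc k) = ys k + \<delta> *\<^sub>R vh k"
    and vsS: "\<And>k. vs (Suc k) = vh k + (\<delta> / 2) *\<^sub>R F (ys (Suc k))"
    using H unfolding F_def by auto
  have rec: "ys (Suc (Suc k)) = 2 *\<^sub>R ys (Suc k) - ys k + \<delta>\<^sup>2 *\<^sub>R F (ys (Suc k))" for k
  proof -
    have d: "\<delta> *\<^sub>R vh k = ys (Suc k) - ys k" using ysS[of k] by simp
    have "ys (Suc (Suc k)) = ys (Suc k) + \<delta> *\<^sub>R (vh k + (\<delta> / 2) *\<^sub>R F (ys (Suc k)) + (\<delta> / 2) *\<^sub>R F (ys (Suc k)))"
      using ysS[of "Suc k"] vh[of "Suc k"] vsS[of k] by simp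
    also have "\<dots> = ys (Suc k) + \<delta> *\<^sub>R vh k + (\<delta> * \<delta>) *\<^sub>R F (ys (Suc k))"
    proof -
      have "(\<delta> / 2) *\<^sub>R F (ys (Suc k)) + (\<delta> / 2) *\<^sub>R F (ys (Suc k)) = \<delta> *\<^sub>R F (ys (Suc k))"
        by (simp only: scaleR_add_left[symmetric]) simp
      then show ?thesis by (simp only: add.assoc scaleR_add_right scaleR_scaleR)
    qed
    also have "\<dots> = 2 *\<^sub>R ys (Suc k) - ys k + \<delta>\<^sup>2 *\<^sub>R F (ys (Suc k))"
      unfolding d by (simp add: power2_eq_square scaleR_2)
    finally show ?thesis .
  qed
  have base1: "ys 1 = y \<delta>"
  proof -
    have e: "y (0 + \<delta>) - 2 *\<^sub>R y 0 + y (0 - \<delta>) = \<delta>\<^sup>2 *\<^sub>R F (y 0)"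
      unfolding F_def by (rule even_identity[OF dy ddy])
    have o: "y (0 + \<delta>) - y (0 - \<delta>) = (2 * \<delta>) *\<^sub>R (sigma_mat (\<delta>\<^sup>2 *\<^sub>R A) *v y' 0)"
      by (rule odd_identity[OF dy ddy])
    have "y \<delta> = y 0 + (1/2) *\<^sub>R (\<delta>\<^sup>2 *\<^sub>R F (y 0)) + (1/2) *\<^sub>R ((2 * \<delta>) *\<^sub>R (sigma_mat (\<delta>\<^sup>2 *\<^sub>R A) *v y' 0))"
      using lin_aux[OF e o] by simp
    then have "y \<delta> = y 0 + (\<delta> * (\<delta> / 2)) *\<^sub>R F (y 0) + \<delta> *\<^sub>R (sigma_mat (\<delta>\<^sup>2 *\<^sub>R A) *v y' 0)"
      by (simp add: power2_eq_square)
    moreover have "ys 1 = y 0 + \<delta> *\<^sub>R (sigma_mat (\<delta>\<^sup>2 *\<^sub>R A) *v y' 0) + (\<delta> * (\<delta> / 2)) *\<^sub>R F (y 0)"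
      using ysS[of 0] vh[of 0] y0 v0 by (simp add: scaleR_add_right)
    ultimately show ?thesis by (simp only: add_ac)
  qed
  have "ys k = y (real k * \<delta>) \<and> ys (Suc k) = y (real (Suc k) * \<delta>)"
  proof (induction k)
    case 0 then show ?case using y0 base1 by simp
  next
    case (Suc k)
    have e: "y (real (Suc k) * \<delta> + \<delta>) - 2 *\<^sub>R y (real (Suc k) * \<delta>) + y (real (Suc k) * \<delta> - \<delta>)
        = \<delta>\<^sup>2 *\<^sub>R F (y (real (Suc k) * \<delta>))"
      unfolding F_def by (rule even_identity[OF dy ddy])
    have t1: "real (Suc k) * \<delta> + \<delta> = real (Suc (Suc k)) * \<delta>" by (simp add: algebra_simps)
    have t2: "real (Suc k) * \<delta> - \<delta> = real k * \<delta>" by (simp add: algebra_simps)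
    have "ys (Suc (Suc k)) = y (real (Suc (Suc k)) * \<delta>)"
    proof -
      have "ys (Suc (Suc k)) = 2 *\<^sub>R y (real (Suc k) * \<delta>) - y (real k * \<delta>) + \<delta>\<^sup>2 *\<^sub>R F (y (real (Suc k) * \<delta>))"
        using rec[of k] Suc.IH by simp
      moreover have "y (real (Suc (Suc k)) * \<delta>) = 2 *\<^sub>R y (real (Suc k) * \<delta>) - y (real k * \<delta>) + \<delta>\<^sup>2 *\<^sub>R F (y (real (Suc k) * \<delta>))"
        by (rule grp_aux) (use e[unfolded t1 t2] in simp)
      ultimately show ?thesis by simp
    qed
    then show ?case using Suc by simp
  qed
  then show "ys k = y (real k * \<delta>)" by simp
qed


end
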